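(* For every term $t\in T( *,\circ,x)$ and every word $w\in\mathcal{W}$ such that $t\cdot\mathit{eval}(w)$ is defined, the equality $\mathtt{Cc}(t\cdot\mathit{eval}(w))=\mathtt{Cc}(t)\cdot\mathrm{sh}_0(\mathtt{eval}(w))$ holds in the group $G_{\mathtt{ALD}}$. (That is, $\mathtt{Cc}$ is an $\mathrm{sh}_0$-blueprint for the $\mathtt{ALD}$-laws.)
   Context: $T( *,\circ,x)$: terms in the single variable $x$ with binary symbols $*,\circ$. Addresses: finite sequences over $\{0,1\}$, $\varepsilon$ empty, concatenation written by juxtaposition; $t/\alpha$ the subterm at $\alpha$. Two addresses are incomparable if neither is a prefix of the other. Partial operators on terms (acting on the right): $S^{+}_{\alpha}$ is defined on $t$ iff $t/\alpha=t_1*(t_2\square t_3)$ with $\square\in\{*,\circ\}$ and replaces it by $(t_1*t_2)\square(t_1*t_3)$; $A^{+}_{\alpha}$ is defined iff $t/\alpha=t_1*(t_2*t_3)$ and replaces it by $(t_1\circ t_2)*t_3$; $S^-_\alpha,A^-_\alpha$ are the inverse partial maps. $\mathcal{W}$ is the free monoid on the letters $S^{\pm}_\alpha,A^{\pm}_\alpha$; $\mathit{eval}(w)$ is the partial map obtained by applying the letters of $w$ from left to right. $G_{\mathtt{ALD}}$ is the group generated by elements $S_\alpha,A_\alpha$ ($\alpha\in\{0,1\}^*$) subject to the following relations, where $X,Y$ each stand for $S$ or $A$ and $\alpha,\beta,\delta$ are arbitrary addresses ($\delta$ possibly empty): $X_\alpha Y_\beta=Y_\beta X_\alpha$ for $\alpha,\beta$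 incomparable; $X_{\alpha0\delta}S_\alpha=S_\alpha X_{\alpha00\delta}X_{\alpha10\delta}$; $X_{\alpha10\delta}S_\alpha=S_\alpha X_{\alpha01\delta}$; $X_{\alpha11\delta}S_\alpha=S_\alpha X_{\alpha11\delta}$; $X_{\alpha0\delta}A_\alpha=A_\alpha X_{\alpha00\delta}$; $X_{\alpha10\delta}A_\alpha=A_\alpha X_{\alpha01\delta}$; $X_{\alpha11\delta}A_\alpha=A_\alpha X_{\alpha1\delta}$; $S_\alpha S_{\alpha1}S_\alpha=S_{\alpha1}S_\alpha S_{\alpha1}S_{\alpha0}$; $S_\alpha S_{\alpha1}A_\alpha=A_{\alpha1}S_\alpha S_{\alpha0}$; $A_\alpha S_\alpha=S_{\alpha1}S_\alpha A_{\alpha1}A_{\alpha0}$. $\mathtt{eval}:\mathcal{W}\to G_{\mathtt{ALD}}$ is the monoid homomorphism with $S^{+}_\alpha\mapsto S_\alpha$, $S^-_\alpha\mapsto S_\alpha^{-1}$, $A^+_\alpha\mapsto A_\alpha$, $A^-_\alpha\mapsto A_\alpha^{-1}$. For an address $\beta$, $\mathrm{sh}_\beta$ is the endomorphism of $G_{\mathtt{ALD}}$ with $S_\alpha\mapsto S_{\beta\alpha}$, $A_\alpha\mapsto A_{\beta\alpha}$. $\mathtt{Cc}:T( *,\circ,x)\to G_{\mathtt{ALD}}$ is defined by $\mathtt{Cc}(x)=1$, $\mathtt{Cc}(t_1*t_2)=\mathtt{Cc}(t_1)\,\mathrm{sh}_1(\mathtt{Cc}(t_2))\,S_\varepsilon\,\mathrm{sh}_1(\mathtt{Cc}(t_1))^{-1}$,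 $\mathtt{Cc}(t_1\circ t_2)=\mathtt{Cc}(t_1)\,\mathrm{sh}_1(\mathtt{Cc}(t_2))\,A_\varepsilon$. *)

theory Defs
  imports Main "HOL-Library.Sublist"
begin

datatype trm = Var | Star trm trm | Circ trm trm

text \<open>Addresses: finite sequences over {0,1}; False encodes 0, True encodes 1.\<close>
type_synonym addr = "bool list"

fun at_addr :: "addr \<Rightarrow> (trm \<Rightarrow> trm option) \<Rightarrow> trm \<Rightarrow> trm option" where
  "at_addr [] f t = f t"
| "at_addr (False # a) f (Star t1 t2) = map_option (\<lambda>s. Star s t2) (at_addr a f t1)"
| "at_addr (True # a) f (Star t1 t2) = map_option (\<lambda>s. Star t1 s) (at_addr a f t2)"
| "at_addr (False # a) f (Circ t1 t2) = map_option (\<lambda>s. Circ s t2) (at_addr a f t1)"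
| "at_addr (True # a) f (Circ t1 t2) = map_option (\<lambda>s. Circ t1 s) (at_addr a f t2)"
| "at_addr (_ # a) f Var = None"

fun Splus0 :: "trm \<Rightarrow> trm option" where
  "Splus0 (Star t1 (Star t2 t3)) = Some (Star (Star t1 t2) (Star t1 t3))"
| "Splus0 (Star t1 (Circ t2 t3)) = Some (Circ (Star t1 t2) (Star t1 t3))"
| "Splus0 _ = None"

fun Aplus0 :: "trm \<Rightarrow> trm option" where
  "Aplus0 (Star t1 (Star t2 t3)) = Some (Star (Circ t1 t2) t3)"
| "Aplus0 _ = None"

fun Sminus0 :: "trm \<Rightarrow> trm option" where
  "Sminus0 (Star (Star t1 t2) (Star t1' t3)) =
     (if t1 = t1' then Some (Star t1 (Star t2 t3)) else None)"
| "Sminus0 (Circ (Star t1 t2) (Star t1' t3)) =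
     (if t1 = t1' then Some (Star t1 (Circ t2 t3)) else None)"
| "Sminus0 _ = None"

fun Aminus0 :: "trm \<Rightarrow> trm option" where
  "Aminus0 (Star (Circ t1 t2) t3) = Some (Star t1 (Star t2 t3))"
| "Aminus0 _ = None"

datatype letter = Sp addr | Sm addr | Ap addr | Am addr

fun letter_op :: "letter \<Rightarrow> trm \<Rightarrow> trm option" where
  "letter_op (Sp a) = at_addr a Splus0"
| "letter_op (Sm a) = at_addr a Sminus0"
| "letter_op (Ap a) = at_addr a Aplus0"
| "letter_op (Am a) = at_addr a Aminus0"

fun eval_op :: "letter list \<Rightarrow> trm \<Rightarrow> trm option" where
  "eval_op [] t = Some t"
| "eval_op (l # w) t = Option.bind (letter_op l t) (eval_op w)"

section \<open>The group G_ALD, as words in the generators and their inverses modulo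
  the congruence generated by free cancellation and the defining relations\<close>

datatype gen = GS addr | GA addr

text \<open>A group word: (g, True) stands for g, (g, False) for g^-1.\<close>
type_synonym gword = "(gen \<times> bool) list"

definition pos :: "gen \<Rightarrow> gen \<times> bool" where "pos g = (g, True)"

definition incomparable :: "addr \<Rightarrow> addr \<Rightarrow> bool" where
  "incomparable a b \<longleftrightarrow> \<not> prefix a b \<and> \<not> prefix b a"

inductive_set ald_rels :: "(gword \<times> gword) set" where
  comm: "\<lbrakk>X \<in> {GS, GA}; Y \<in> {GS, GA}; incomparable a b\<rbrakk> \<Longrightarrow>
     ([pos (X a), pos (Y b)], [pos (Y b), pos (X a)]) \<in> ald_rels"
| S0: "X \<in> {GS, GA} \<Longrightarrow>
     ([pos (X (a @ [False] @ d)), pos (GS a)],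
      [pos (GS a), pos (X (a @ [False, False] @ d)), pos (X (a @ [True, False] @ d))]) \<in> ald_rels"
| S10: "X \<in> {GS, GA} \<Longrightarrow>
     ([pos (X (a @ [True, False] @ d)), pos (GS a)],
      [pos (GS a), pos (X (a @ [False, True] @ d))]) \<in> ald_rels"
| S11: "X \<in> {GS, GA} \<Longrightarrow>
     ([pos (X (a @ [True, True] @ d)), pos (GS a)],
      [pos (GS a), pos (X (a @ [True, True] @ d))]) \<in> ald_rels"
| A0: "X \<in> {GS, GA} \<Longrightarrow>
     ([pos (X (a @ [False] @ d)), pos (GA a)],
      [pos (GA a), pos (X (a @ [False, False] @ d))]) \<in> ald_rels"
| A10: "X \<in> {GS, GA} \<Longrightarrow>
     ([pos (X (a @ [True, False] @ d)), pos (GA a)],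
      [pos (GA a), pos (X (a @ [False, True] @ d))]) \<in> ald_rels"
| A11: "X \<in> {GS, GA} \<Longrightarrow>
     ([pos (X (a @ [True, True] @ d)), pos (GA a)],
      [pos (GA a), pos (X (a @ [True] @ d))]) \<in> ald_rels"
| SSS: "([pos (GS a), pos (GS (a @ [True])), pos (GS a)],
         [pos (GS (a @ [True])), pos (GS a), pos (GS (a @ [True])), pos (GS (a @ [False]))]) \<in> ald_rels"
| SSA: "([pos (GS a), pos (GS (a @ [True])), pos (GA a)],
         [pos (GA (a @ [True])), pos (GS a), pos (GS (a @ [False]))]) \<in> ald_rels"
| AS: "([pos (GA a), pos (GS a)],
        [pos (GS (a @ [True])), pos (GS a), pos (GA (a @ [True])), pos (GA (a @ [False]))]) \<in> ald_rels"

inductive ald_eq :: "gword \<Rightarrow> gword \<Rightarrow> bool" where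
  refl: "ald_eq u u"
| sym: "ald_eq u v \<Longrightarrow> ald_eq v u"
| trans: "ald_eq u v \<Longrightarrow> ald_eq v w \<Longrightarrow> ald_eq u w"
| cancel: "ald_eq (u @ [(g, b), (g, \<not> b)] @ v) (u @ v)"
| rel: "(l, r) \<in> ald_rels \<Longrightarrow> ald_eq (u @ l @ v) (u @ r @ v)"

definition winv :: "gword \<Rightarrow> gword" where
  "winv u = rev (map (\<lambda>(g, b). (g, \<not> b)) u)"

fun sh_gen :: "addr \<Rightarrow> gen \<Rightarrow> gen" where
  "sh_gen b (GS a) = GS (b @ a)"
| "sh_gen b (GA a) = GA (b @ a)"

definition sh :: "addr \<Rightarrow> gword \<Rightarrow> gword" where
  "sh b u = map (\<lambda>(g, e). (sh_gen b g, e)) u"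

fun letter_grp :: "letter \<Rightarrow> gen \<times> bool" where
  "letter_grp (Sp a) = (GS a, True)"
| "letter_grp (Sm a) = (GS a, False)"
| "letter_grp (Ap a) = (GA a, True)"
| "letter_grp (Am a) = (GA a, False)"

definition eval_grp :: "letter list \<Rightarrow> gword" where
  "eval_grp w = map letter_grp w"

fun Cc :: "trm \<Rightarrow> gword" where
  "Cc Var = []"
| "Cc (Star t1 t2) = Cc t1 @ sh [True] (Cc t2) @ [pos (GS [])] @ winv (sh [True] (Cc t1))"
| "Cc (Circ t1 t2) = Cc t1 @ sh [True] (Cc t2) @ [pos (GA [])]"

end

theory Submission
  imports Defs
begin

declare ald_eq.trans[trans]

lemma ald_eq_ctx: "ald_eq u v \<Longrightarrow> ald_eq (x @ u @ y) (x @ v @ y)"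
proof (induction rule: ald_eq.induct)
  case (refl u) then show ?case by (rule ald_eq.refl)
next
  case (sym u v) show ?case using sym.IH by (rule ald_eq.sym)
next
  case (trans u v w) then show ?case by (metis ald_eq.trans)
next
  case (cancel u g b v)
  then show ?case using ald_eq.cancel[of "x @ u" g b "v @ y"] by simp
next
  case (rel l r u v)
  then show ?case using ald_eq.rel[of l r "x @ u" "v @ y"] by simp
qed

lemma ald_eq_app: "ald_eq u u' \<Longrightarrow> ald_eq v v' \<Longrightarrow> ald_eq (u @ v) (u' @ v')"
proof -
  assume a: "ald_eq u u'" "ald_eq v v'"
  have "ald_eq (u @ v) (u' @ v)" using ald_eq_ctx[OF a(1), of "[]" v] by simp
  also have "ald_eq (u' @ v) (u' @ v')" using ald_eq_ctx[OF a(2), of u' "[]"] by simp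
  finally show ?thesis .
qed


lemma winv_Nil[simp]: "winv [] = []" by (simp add: winv_def)
lemma winv_append[simp]: "winv (u @ v) = winv v @ winv u" by (simp add: winv_def)
lemma winv_Cons[simp]: "winv (x # u) = winv u @ [(fst x, \<not> snd x)]"
  by (simp add: winv_def split: prod.splits)
lemma winv_winv[simp]: "winv (winv u) = u"
  by (induction u) auto

lemma cancel2: "ald_eq [(g, b), (g, \<not> b)] []"
  using ald_eq.cancel[of "[]" g b "[]"] by simp

lemma inv_r: "ald_eq (u @ winv u) []"
proof (induction u)
  case Nil then show ?case by (simp add: ald_eq.refl)
next
  case (Cons x u)
  have "ald_eq (x # u @ winv u @ [(fst x, \<not> snd x)]) ([x] @ [] @ [(fst x, \<not> snd x)])"
    using ald_eq_ctx[OF Cons, of "[x]" "[(fst x, \<not> snd x)]"] by simp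
  also have "ald_eq ([x] @ [] @ [(fst x, \<not> snd x)]) []"
    using cancel2[of "fst x" "snd x"] by simp
  finally show ?case by simp
qed

lemma inv_l: "ald_eq (winv u @ u) []"
  using inv_r[of "winv u"] by simp

lemma winv_cong: assumes "ald_eq u v" shows "ald_eq (winv u) (winv v)"
proof -
  have "ald_eq (winv u) (winv u @ (v @ winv v))"
    using ald_eq_ctx[OF ald_eq.sym[OF inv_r[of v]], of "winv u" "[]"] by simp
  also have "ald_eq (winv u @ (v @ winv v)) (winv u @ (u @ winv v))"
    using ald_eq_ctx[OF ald_eq.sym[OF assms], of "winv u" "winv v"] by simp
  also have "ald_eq (winv u @ (u @ winv v)) ([] @ winv v)"
    using ald_eq_ctx[OF inv_l[of u], of "[]" "winv v"] by simp
  finally show ?thesis by simp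
qed

lemma sh_append[simp]: "sh p (u @ v) = sh p u @ sh p v" by (simp add: sh_def)
lemma sh_Nil[simp]: "sh p [] = []" by (simp add: sh_def)
lemma sh_Cons[simp]: "sh p ((g, b) # u) = (sh_gen p g, b) # sh p u" by (simp add: sh_def)
lemma sh_gen_sh_gen[simp]: "sh_gen p (sh_gen q g) = sh_gen (p @ q) g" by (cases g) auto
lemma sh_sh[simp]: "sh p (sh q u) = sh (p @ q) u" by (induction u) auto
lemma sh_winv[simp]: "sh p (winv u) = winv (sh p u)" by (induction u) auto
lemma sh_pos[simp]: "sh p (pos g # u) = pos (sh_gen p g) # sh p u" by (simp add: pos_def)

lemma shX: "X \<in> {GS, GA} \<Longrightarrow> sh_gen p (X a) = X (p @ a)" by auto

lemma sh_rels: "(l, r) \<in> ald_rels \<Longrightarrow> (sh p l, sh p r) \<in> ald_rels"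
proof (induction rule: ald_rels.induct)
  case (comm X Y a b)
  have "incomparable (p @ a) (p @ b)" using comm(3) by (simp add: incomparable_def)
  then show ?case using ald_rels.comm[of X Y "p @ a" "p @ b"] comm by (simp add: shX)
next
  case (S0 X a d) then show ?case using ald_rels.S0[of X "p @ a" d] by (simp add: shX)
next
  case (S10 X a d) then show ?case using ald_rels.S10[of X "p @ a" d] by (simp add: shX)
next
  case (S11 X a d) then show ?case using ald_rels.S11[of X "p @ a" d] by (simp add: shX)
next
  case (A0 X a d) then show ?case using ald_rels.A0[of X "p @ a" d] by (simp add: shX)
next
  case (A10 X a d) then show ?case using ald_rels.A10[of X "p @ a" d] by (simp add: shX)
next
  case (A11 X a d) then show ?case using ald_rels.A11[of X "p @ a" d] by (simp add: shX)
next
  case (SSS a) then show ?case using ald_rels.SSS[of "p @ a"] by simp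
next
  case (SSA a) then show ?case using ald_rels.SSA[of "p @ a"] by simp
next
  case (AS a) then show ?case using ald_rels.AS[of "p @ a"] by simp
qed

lemma sh_cong: "ald_eq u v \<Longrightarrow> ald_eq (sh p u) (sh p v)"
proof (induction rule: ald_eq.induct)
  case (refl u) then show ?case by (rule ald_eq.refl)
next
  case (sym u v) show ?case using sym.IH by (rule ald_eq.sym)
next
  case (trans u v w) then show ?case by (metis ald_eq.trans)
next
  case (cancel u g b v)
  then show ?case using ald_eq.cancel[where u="sh p u" and g="sh_gen p g" and b=b and v="sh p v"] by simp
next
  case (rel l r u v)
  then show ?case using ald_eq.rel[OF sh_rels[OF rel, where p=p], where u="sh p u" and v="sh p v"] by simp
qed


lemma fst_pos[simp]: "fst (pos g) = g" and snd_pos[simp]: "snd (pos g) = True"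
  by (simp_all add: pos_def)

lemma rel_eq: "(l, r) \<in> ald_rels \<Longrightarrow> ald_eq l r"
  using ald_eq.rel[where u="[]" and v="[]"] by simp

definition comm :: "gword \<Rightarrow> gword \<Rightarrow> bool" where
  "comm u v \<longleftrightarrow> ald_eq (u @ v) (v @ u)"

lemma comm_sym: "comm u v \<Longrightarrow> comm v u"
  unfolding comm_def by (rule ald_eq.sym)

lemma comm_app_r: assumes "comm u v" "comm u w" shows "comm u (v @ w)"
proof -
  have "ald_eq (u @ v @ w) (v @ u @ w)"
    using ald_eq_ctx[OF assms(1)[unfolded comm_def], of "[]" w] by simp
  also have "ald_eq (v @ u @ w) (v @ w @ u)"
    using ald_eq_ctx[OF assms(2)[unfolded comm_def], of v "[]"] by simp
  finally show ?thesis unfolding comm_def by simp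
qed

lemma comm_app_l: "comm u v \<Longrightarrow> comm w v \<Longrightarrow> comm (u @ w) v"
  by (meson comm_app_r comm_sym)

lemma conj_winv: assumes "ald_eq (x @ h) (h @ y)" shows "ald_eq (winv x @ h) (h @ winv y)"
proof -
  have "ald_eq (winv x @ h) (winv x @ h @ y @ winv y)"
    using ald_eq_ctx[OF ald_eq.sym[OF inv_r[of y]], of "winv x @ h" "[]"] by simp
  also have "ald_eq (winv x @ h @ y @ winv y) (winv x @ x @ h @ winv y)"
    using ald_eq_ctx[OF ald_eq.sym[OF assms], of "winv x" "winv y"] by simp
  also have "ald_eq (winv x @ x @ h @ winv y) (h @ winv y)"
    using ald_eq_ctx[OF inv_l[of x], of "[]" "h @ winv y"] by simp
  finally show ?thesis .
qed

lemma comm_winv: "comm u v \<Longrightarrow> comm (winv u) v"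
  unfolding comm_def by (rule conj_winv)

lemma conj_cancel: assumes "comm u h" shows "ald_eq (winv u @ h @ u) h"
proof -
  have "ald_eq (winv u @ h @ u) (winv u @ u @ h)"
    using ald_eq_ctx[OF ald_eq.sym[OF assms[unfolded comm_def]], of "winv u" "[]"] by simp
  also have "ald_eq (winv u @ u @ h) h"
    using ald_eq_ctx[OF inv_l[of u], of "[]" h] by simp
  finally show ?thesis .
qed

lemma comm_gens: "(\<forall>g\<in>fst ` set u. comm [(g, True)] v) \<Longrightarrow> comm u v"
proof (induction u)
  case Nil then show ?case by (simp add: comm_def ald_eq.refl)
next
  case (Cons x u)
  obtain g b where x: "x = (g, b)" by force
  have c: "comm [(g, True)] v" using Cons.prems x by force
  have "comm [(g, b)] v"
  proof (cases b)
    case True then show ?thesis using c by simp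
  next
    case False then show ?thesis using comm_winv[OF c] by simp
  qed
  then show ?case using comm_app_l[of "[x]" v u] Cons x by simp
qed

definition addr_in :: "addr \<Rightarrow> gword \<Rightarrow> bool" where
  "addr_in p u \<longleftrightarrow> (\<forall>g\<in>fst ` set u. \<exists>b. g = GS (p @ b) \<or> g = GA (p @ b))"

lemma addr_in_sh[simp]: "addr_in p (sh p u)"
proof -
  have "\<And>g. \<exists>b. sh_gen p g = GS (p @ b) \<or> sh_gen p g = GA (p @ b)"
    by (case_tac g) auto
  then show ?thesis by (auto simp: addr_in_def sh_def)
qed

lemma addr_in_winv[simp]: "addr_in p (winv u) = addr_in p u"
  by (auto simp: addr_in_def winv_def image_iff)

lemma addr_in_mono: "addr_in (p @ q) u \<Longrightarrow> addr_in p u"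
  by (force simp: addr_in_def)

lemma gcomm: assumes "X \<in> {GS, GA}" "Y \<in> {GS, GA}" "incomparable a b"
  shows "comm [pos (X a)] [pos (Y b)]"
  unfolding comm_def using rel_eq[OF ald_rels.comm[OF assms]] by simp

lemma incomp_ext: "incomparable p q \<Longrightarrow> incomparable (p @ b) q"
  unfolding incomparable_def
proof (intro conjI notI)
  assume "\<not> prefix p q \<and> \<not> prefix q p" "prefix (p @ b) q"
  then show False using prefix_order.trans[of p "p @ b" q] by simp
next
  assume a: "\<not> prefix p q \<and> \<not> prefix q p" "prefix q (p @ b)"
  have "prefix p (p @ b)" by simp
  from prefix_same_cases[OF this a(2)] a(1) show False by blast
qed

lemma addr_comm: assumes "incomparable p q" "addr_in p u" "X \<in> {GS, GA}"
  shows "comm u [pos (X q)]"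
proof (rule comm_gens, intro ballI)
  fix g assume "g \<in> fst ` set u"
  then obtain b where "g = GS (p @ b) \<or> g = GA (p @ b)" using assms(2) addr_in_def by blast
  then show "comm [(g, True)] [pos (X q)]"
    using gcomm[OF _ assms(3) incomp_ext[OF assms(1)]] unfolding pos_def by auto
qed

lemma addr_comm_S: assumes "addr_in [True, True] u" shows "comm u [pos (GS [])]"
proof (rule comm_gens, intro ballI)
  fix g assume "g \<in> fst ` set u"
  then obtain b where "g = GS ([True, True] @ b) \<or> g = GA ([True, True] @ b)"
    using assms addr_in_def by blast
  then show "comm [(g, True)] [pos (GS [])]"
    using rel_eq[OF ald_rels.S11[of GS "[]" b]] rel_eq[OF ald_rels.S11[of GA "[]" b]]
    unfolding pos_def comm_def by auto
qed

lemma conjA: "ald_eq (sh [True, True] u @ [pos (GA [])]) ([pos (GA [])] @ sh [True] u)"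
proof (induction u)
  case Nil then show ?case by (simp add: ald_eq.refl)
next
  case (Cons x u)
  obtain g b where x: "x = (g, b)" by force
  obtain X d where g: "X \<in> {GS, GA}" "g = X d" by (cases g) auto
  have 1: "ald_eq [(X (True # True # d), True), pos (GA [])] [pos (GA []), (X (True # d), True)]"
    using rel_eq[OF ald_rels.A11[of X "[]" d]] g(1) unfolding pos_def by simp
  have 2: "ald_eq [(X (True # True # d), b), pos (GA [])] [pos (GA []), (X (True # d), b)]"
  proof (cases b)
    case True then show ?thesis using 1 by simp
  next
    case False then show ?thesis using conj_winv[of "[(X (True # True # d), True)]" "[pos (GA [])]" "[(X (True # d), True)]"] 1 by simp
  qed
  have "ald_eq ((X (True # True # d), b) # sh [True, True] u @ [pos (GA [])])
     ((X (True # True # d), b) # [pos (GA [])] @ sh [True] u)"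
    using ald_eq_ctx[OF Cons.IH, of "[(X (True # True # d), b)]" "[]"] by simp
  also have "ald_eq ((X (True # True # d), b) # [pos (GA [])] @ sh [True] u)
     ([pos (GA []), (X (True # d), b)] @ sh [True] u)"
    using ald_eq_ctx[OF 2, of "[]" "sh [True] u"] by simp
  finally show ?case using x g shX[OF g(1)] by simp
qed


lemma inc_TF: "incomparable (True # p) (False # q)" by (simp add: incomparable_def)
lemma inc_FT: "incomparable (False # p) (True # q)" by (simp add: incomparable_def)

lemma comm_S0S1: "comm [pos (X [False])] [pos (Y [True])]" if "X \<in> {GS, GA}" "Y \<in> {GS, GA}"
  using gcomm[OF that, of "[False]" "[True]"] inc_FT[of "[]" "[]"] by simp

lemma SSS4: "ald_eq [pos (GS []), pos (GS [True]), pos (GS []), (GS [True], False)]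
                    [pos (GS [True]), pos (GS []), pos (GS [False])]"
proof -
  have "ald_eq [pos (GS []), pos (GS [True]), pos (GS []), (GS [True], False)]
     [pos (GS [True]), pos (GS []), pos (GS [True]), pos (GS [False]), (GS [True], False)]"
    using ald_eq_ctx[OF rel_eq[OF ald_rels.SSS[of "[]"]], of "[]" "[(GS [True], False)]"] by simp
  also have "ald_eq [pos (GS [True]), pos (GS []), pos (GS [True]), pos (GS [False]), (GS [True], False)]
     [pos (GS [True]), pos (GS []), pos (GS [False]), pos (GS [True]), (GS [True], False)]"
    using ald_eq_ctx[OF comm_S0S1[of GS GS, unfolded comm_def, THEN ald_eq.sym],
       of "[pos (GS [True]), pos (GS [])]" "[(GS [True], False)]"] by simp
  also have "ald_eq [pos (GS [True]), pos (GS []), pos (GS [False]), pos (GS [True]), (GS [True], False)]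
     [pos (GS [True]), pos (GS []), pos (GS [False])]"
    using ald_eq_ctx[OF cancel2[of "GS [True]" True], of "[pos (GS [True]), pos (GS []), pos (GS [False])]" "[]"]
    by (simp add: pos_def)
  finally show ?thesis .
qed

lemma AS3: "ald_eq [pos (GA []), pos (GS []), (GA [True], False)]
                    [pos (GS [True]), pos (GS []), pos (GA [False])]"
proof -
  have "ald_eq [pos (GA []), pos (GS []), (GA [True], False)]
     [pos (GS [True]), pos (GS []), pos (GA [True]), pos (GA [False]), (GA [True], False)]"
    using ald_eq_ctx[OF rel_eq[OF ald_rels.AS[of "[]"]], of "[]" "[(GA [True], False)]"] by simp
  also have "ald_eq [pos (GS [True]), pos (GS []), pos (GA [True]), pos (GA [False]), (GA [True], False)]
     [pos (GS [True]), pos (GS []), pos (GA [False]), pos (GA [True]), (GA [True], False)]"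
    using ald_eq_ctx[OF comm_S0S1[of GA GA, unfolded comm_def, THEN ald_eq.sym],
       of "[pos (GS [True]), pos (GS [])]" "[(GA [True], False)]"] by simp
  also have "ald_eq [pos (GS [True]), pos (GS []), pos (GA [False]), pos (GA [True]), (GA [True], False)]
     [pos (GS [True]), pos (GS []), pos (GA [False])]"
    using ald_eq_ctx[OF cancel2[of "GA [True]" True], of "[pos (GS [True]), pos (GS []), pos (GA [False])]" "[]"]
    by (simp add: pos_def)
  finally show ?thesis .
qed

lemma root_SS: "ald_eq (Cc (Star (Star t1 t2) (Star t1 t3))) (Cc (Star t1 (Star t2 t3)) @ [pos (GS [False])])"
proof -
  let ?C1 = "Cc t1" and ?c1 = "sh [True] (Cc t1)" and ?c11 = "sh [True, True] (Cc t1)"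
  let ?d2 = "sh [True] (Cc t2)" and ?d22 = "sh [True, True] (Cc t2)" and ?e3 = "sh [True, True] (Cc t3)"
  let ?S = "pos (GS [])" and ?Sr = "pos (GS [True])" and ?Sl = "pos (GS [False])" and ?Sri = "(GS [True], False)"
  have "ald_eq (Cc (Star (Star t1 t2) (Star t1 t3))) (?C1 @ ?d2 @ [?S] @ winv ?c1 @ ?c1 @ ?e3 @ [?Sr] @ winv ?c11 @ [?S] @ ?c11 @ [?Sri] @ winv ?d22 @ winv ?c1)"
    by (simp add: ald_eq.refl)
  also have "ald_eq \<dots> (?C1 @ ?d2 @ [?S] @ ?e3 @ [?Sr] @ winv ?c11 @ [?S] @ ?c11 @ [?Sri] @ winv ?d22 @ winv ?c1)"
    using ald_eq_ctx[OF inv_l[of ?c1], of "?C1 @ ?d2 @ [?S]" "?e3 @ [?Sr] @ winv ?c11 @ [?S] @ ?c11 @ [?Sri] @ winv ?d22 @ winv ?c1"] by simp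
  also have "ald_eq \<dots> (?C1 @ ?d2 @ [?S] @ ?e3 @ [?Sr] @ [?S] @ [?Sri] @ winv ?d22 @ winv ?c1)"
    using ald_eq_ctx[OF conj_cancel[OF addr_comm_S[of ?c11]], of "?C1 @ ?d2 @ [?S] @ ?e3 @ [?Sr]" "[?Sri] @ winv ?d22 @ winv ?c1"] by simp
  also have "ald_eq \<dots> (?C1 @ ?d2 @ ?e3 @ [?S] @ [?Sr] @ [?S] @ [?Sri] @ winv ?d22 @ winv ?c1)"
    using ald_eq_ctx[OF addr_comm_S[of ?e3, unfolded comm_def, THEN ald_eq.sym], of "?C1 @ ?d2" "[?Sr] @ [?S] @ [?Sri] @ winv ?d22 @ winv ?c1"] by simp
  also have "ald_eq \<dots> (?C1 @ ?d2 @ ?e3 @ [?Sr, ?S, ?Sl] @ winv ?d22 @ winv ?c1)"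
    using ald_eq_ctx[OF SSS4, of "?C1 @ ?d2 @ ?e3" "winv ?d22 @ winv ?c1"] by simp
  also have "ald_eq \<dots> (?C1 @ ?d2 @ ?e3 @ [?Sr] @ winv ?d22 @ [?S, ?Sl] @ winv ?c1)"
  proof -
    have cw: "comm (winv ?d22) ([?S] @ [?Sl])"
      by (rule comm_winv, rule comm_app_r, rule addr_comm_S, simp,
          rule addr_comm[of "[True, True]"], simp add: inc_TF[of "[True]" "[]", simplified], simp_all)
    show ?thesis
      using ald_eq_ctx[OF cw[unfolded comm_def, THEN ald_eq.sym], of "?C1 @ ?d2 @ ?e3 @ [?Sr]" "winv ?c1"] by simp
  qed
  also have "ald_eq \<dots> (?C1 @ ?d2 @ ?e3 @ [?Sr] @ winv ?d22 @ [?S] @ winv ?c1 @ [?Sl])"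
  proof -
    have cw: "comm (winv ?c1) [?Sl]"
      by (rule comm_winv, rule addr_comm[of "[True]"], simp add: inc_TF[of "[]" "[]", simplified], simp_all)
    show ?thesis
      using ald_eq_ctx[OF cw[unfolded comm_def, THEN ald_eq.sym], of "?C1 @ ?d2 @ ?e3 @ [?Sr] @ winv ?d22 @ [?S]" "[]"] by simp
  qed
  also have "ald_eq (?C1 @ ?d2 @ ?e3 @ [?Sr] @ winv ?d22 @ [?S] @ winv ?c1 @ [?Sl]) (Cc (Star t1 (Star t2 t3)) @ [pos (GS [False])])"
    by (simp add: ald_eq.refl)
  finally show ?thesis .
qed


lemma comm_winv_sh1_0: "comm (winv (sh [True] u)) [pos (X (False # q))]" if "X \<in> {GS, GA}"
  by (rule comm_winv, rule addr_comm[of "[True]" "False # q" _ X, OF _ _ that]) (simp_all add: incomparable_def)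

lemma comm_sh1_0: "comm (sh [True] u) [pos (X (False # q))]" if "X \<in> {GS, GA}"
  by (rule addr_comm[of "[True]" "False # q" _ X, OF _ _ that]) (simp_all add: incomparable_def)

lemma comm_winv_sh11_0: "comm (winv (sh [True, True] u)) [pos (X (False # q))]" if "X \<in> {GS, GA}"
  by (rule comm_winv, rule addr_comm[of "[True, True]" "False # q" _ X, OF _ _ that]) (simp_all add: incomparable_def)

lemma root_SC: "ald_eq (Cc (Circ (Star t1 t2) (Star t1 t3))) (Cc (Star t1 (Circ t2 t3)) @ [pos (GS [False])])"
proof -
  let ?C = "Cc t1" and ?c = "sh [True] (Cc t1)" and ?cc = "sh [True, True] (Cc t1)"
  let ?d = "sh [True] (Cc t2)" and ?e = "sh [True, True] (Cc t3)"
  let ?S = "pos (GS [])" and ?Sr = "pos (GS [True])" and ?Sl = "pos (GS [False])"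
  let ?A = "pos (GA [])" and ?Ar = "pos (GA [True])"
  have "ald_eq (Cc (Circ (Star t1 t2) (Star t1 t3))) (?C @ ?d @ [?S] @ winv ?c @ ?c @ ?e @ [?Sr] @ winv ?cc @ [?A])"
    by (simp add: ald_eq.refl)
  also have "ald_eq \<dots> (?C @ ?d @ [?S] @ ?e @ [?Sr] @ winv ?cc @ [?A])"
    using ald_eq_ctx[OF inv_l[of ?c], of "?C @ ?d @ [?S]" "?e @ [?Sr] @ winv ?cc @ [?A]"] by simp
  also have "ald_eq \<dots> (?C @ ?d @ [?S] @ ?e @ [?Sr] @ [?A] @ winv ?c)"
    using ald_eq_ctx[OF conj_winv[OF conjA[of "Cc t1"]], of "?C @ ?d @ [?S] @ ?e @ [?Sr]" "[]"] by simp
  also have "ald_eq \<dots> (?C @ ?d @ ?e @ [?S, ?Sr, ?A] @ winv ?c)"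
    using ald_eq_ctx[OF addr_comm_S[of ?e, unfolded comm_def, THEN ald_eq.sym], of "?C @ ?d" "[?Sr, ?A] @ winv ?c"] by simp
  also have "ald_eq \<dots> (?C @ ?d @ ?e @ [?Ar, ?S, ?Sl] @ winv ?c)"
    using ald_eq_ctx[OF rel_eq[OF ald_rels.SSA[of "[]"]], of "?C @ ?d @ ?e" "winv ?c"] by simp
  also have "ald_eq \<dots> (?C @ ?d @ ?e @ [?Ar, ?S] @ winv ?c @ [?Sl])"
    using ald_eq_ctx[OF comm_winv_sh1_0[of GS "Cc t1" "[]", unfolded comm_def, THEN ald_eq.sym], of "?C @ ?d @ ?e @ [?Ar, ?S]" "[]"] by simp
  also have "ald_eq (?C @ ?d @ ?e @ [?Ar, ?S] @ winv ?c @ [?Sl]) (Cc (Star t1 (Circ t2 t3)) @ [pos (GS [False])])"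
    by (simp add: ald_eq.refl)
  finally show ?thesis .
qed

lemma root_A: "ald_eq (Cc (Star (Circ t1 t2) t3)) (Cc (Star t1 (Star t2 t3)) @ [pos (GA [False])])"
proof -
  let ?C = "Cc t1" and ?c = "sh [True] (Cc t1)"
  let ?d = "sh [True] (Cc t2)" and ?dd = "sh [True, True] (Cc t2)"
  let ?e = "sh [True] (Cc t3)" and ?ee = "sh [True, True] (Cc t3)"
  let ?S = "pos (GS [])" and ?Sr = "pos (GS [True])" and ?Al = "pos (GA [False])"
  let ?A = "pos (GA [])" and ?Ari = "(GA [True], False)"
  have "ald_eq (Cc (Star (Circ t1 t2) t3)) (?C @ ?d @ [?A] @ ?e @ [?S] @ [?Ari] @ winv ?dd @ winv ?c)"
    by (simp add: ald_eq.refl)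
  also have "ald_eq \<dots> (?C @ ?d @ ?ee @ [?A, ?S, ?Ari] @ winv ?dd @ winv ?c)"
    using ald_eq_ctx[OF conjA[of "Cc t3", THEN ald_eq.sym], of "?C @ ?d" "[?S] @ [?Ari] @ winv ?dd @ winv ?c"] by simp
  also have "ald_eq \<dots> (?C @ ?d @ ?ee @ [?Sr, ?S, ?Al] @ winv ?dd @ winv ?c)"
    using ald_eq_ctx[OF AS3, of "?C @ ?d @ ?ee" "winv ?dd @ winv ?c"] by simp
  also have "ald_eq \<dots> (?C @ ?d @ ?ee @ [?Sr] @ winv ?dd @ [?S, ?Al] @ winv ?c)"
  proof -
    have cw: "comm (winv ?dd) ([?S] @ [?Al])"
      by (rule comm_app_r, rule comm_winv, rule addr_comm_S, simp,
          rule comm_winv_sh11_0, simp)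
    show ?thesis
      using ald_eq_ctx[OF cw[unfolded comm_def, THEN ald_eq.sym], of "?C @ ?d @ ?ee @ [?Sr]" "winv ?c"] by simp
  qed
  also have "ald_eq \<dots> (?C @ ?d @ ?ee @ [?Sr] @ winv ?dd @ [?S] @ winv ?c @ [?Al])"
    using ald_eq_ctx[OF comm_winv_sh1_0[of GA "Cc t1" "[]", unfolded comm_def, THEN ald_eq.sym], of "?C @ ?d @ ?ee @ [?Sr] @ winv ?dd @ [?S]" "[]"] by simp
  also have "ald_eq (?C @ ?d @ ?ee @ [?Sr] @ winv ?dd @ [?S] @ winv ?c @ [?Al]) (Cc (Star t1 (Star t2 t3)) @ [pos (GA [False])])"
    by (simp add: ald_eq.refl)
  finally show ?thesis .
qed

lemma lift:
  assumes X: "X \<in> {GS, GA}"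
  shows "(\<And>t t'. f t = Some t' \<Longrightarrow> ald_eq (Cc t') (Cc t @ [pos (X [False])])) \<Longrightarrow>
    at_addr a f t = Some t' \<Longrightarrow> ald_eq (Cc t') (Cc t @ [pos (X (False # a))])"
proof (induction a f t arbitrary: t' rule: at_addr.induct)
  case (1 f t) then show ?case by simp
next
  case (2 a f t1 t2)
  let ?x = "pos (X (False # a))" and ?y = "pos (X (False # False # a))"
  let ?zi = "(X (True # False # a), False)"
  let ?S = "pos (GS [])" and ?d = "sh [True] (Cc t2)" and ?c = "sh [True] (Cc t1)"
  from "2.prems"(2) obtain s where s: "at_addr a f t1 = Some s" "t' = Star s t2" by auto
  have IH: "ald_eq (Cc s) (Cc t1 @ [?x])" using "2.IH"[OF "2.prems"(1) s(1)] .
  have rel: "ald_eq [?x, ?S, ?zi] [?S, ?y]"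
  proof -
    have "ald_eq [?x, ?S, ?zi] [?S, ?y, pos (X (True # False # a)), ?zi]"
      using ald_eq_ctx[OF rel_eq[OF ald_rels.S0[OF X, of "[]" a]], of "[]" "[?zi]"] by simp
    also have "ald_eq \<dots> [?S, ?y]"
      using ald_eq_ctx[OF cancel2[of "X (True # False # a)" True], of "[?S, ?y]" "[]"] by (simp add: pos_def)
    finally show ?thesis .
  qed
  have "ald_eq (Cc t') (Cc s @ ?d @ [?S] @ winv (sh [True] (Cc s)))" using s by (simp add: ald_eq.refl)
  also have "ald_eq \<dots> ((Cc t1 @ [?x]) @ ?d @ [?S] @ winv (sh [True] (Cc t1 @ [?x])))"
    using ald_eq_app[OF IH ald_eq_ctx[OF winv_cong[OF sh_cong[OF IH, of "[True]"]], of "?d @ [?S]" "[]"]] by simp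
  also have "ald_eq \<dots> (Cc t1 @ [?x] @ ?d @ [?S, ?zi] @ winv ?c)" by (simp add: shX[OF X] ald_eq.refl)
  also have "ald_eq \<dots> (Cc t1 @ ?d @ [?x, ?S, ?zi] @ winv ?c)"
    using ald_eq_ctx[OF comm_sh1_0[OF X, where u="Cc t2" and q=a, unfolded comm_def, THEN ald_eq.sym], of "Cc t1" "[?S, ?zi] @ winv ?c"] by simp
  also have "ald_eq \<dots> (Cc t1 @ ?d @ [?S, ?y] @ winv ?c)"
    using ald_eq_ctx[OF rel, of "Cc t1 @ ?d" "winv ?c"] by simp
  also have "ald_eq \<dots> (Cc t1 @ ?d @ [?S] @ winv ?c @ [?y])"
    using ald_eq_ctx[OF comm_winv_sh1_0[OF X, where u="Cc t1" and q="False # a", unfolded comm_def, THEN ald_eq.sym], of "Cc t1 @ ?d @ [?S]" "[]"] by simp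
  also have "ald_eq \<dots> (Cc (Star t1 t2) @ [pos (X (False # False # a))])" by (simp add: ald_eq.refl)
  finally show ?case .
next
  case (3 a f t1 t2)
  let ?x = "pos (X (False # a))" and ?z = "pos (X (True # False # a))" and ?w = "pos (X (False # True # a))"
  let ?S = "pos (GS [])" and ?d = "sh [True] (Cc t2)" and ?c = "sh [True] (Cc t1)"
  from "3.prems"(2) obtain s where s: "at_addr a f t2 = Some s" "t' = Star t1 s" by auto
  have IH: "ald_eq (Cc s) (Cc t2 @ [?x])" using "3.IH"[OF "3.prems"(1) s(1)] .
  have "ald_eq (Cc t') (Cc t1 @ sh [True] (Cc s) @ [?S] @ winv ?c)" using s by (simp add: ald_eq.refl)
  also have "ald_eq \<dots> (Cc t1 @ sh [True] (Cc t2 @ [?x]) @ [?S] @ winv ?c)"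
    using ald_eq_ctx[OF sh_cong[OF IH, of "[True]"], of "Cc t1" "[?S] @ winv ?c"] by simp
  also have "ald_eq \<dots> (Cc t1 @ ?d @ [?z, ?S] @ winv ?c)" by (simp add: shX[OF X] ald_eq.refl)
  also have "ald_eq \<dots> (Cc t1 @ ?d @ [?S, ?w] @ winv ?c)"
    using ald_eq_ctx[OF rel_eq[OF ald_rels.S10[OF X, of "[]" a]], of "Cc t1 @ ?d" "winv ?c"] by simp
  also have "ald_eq \<dots> (Cc t1 @ ?d @ [?S] @ winv ?c @ [?w])"
    using ald_eq_ctx[OF comm_winv_sh1_0[OF X, where u="Cc t1" and q="True # a", unfolded comm_def, THEN ald_eq.sym], of "Cc t1 @ ?d @ [?S]" "[]"] by simp
  also have "ald_eq \<dots> (Cc (Star t1 t2) @ [pos (X (False # True # a))])" by (simp add: ald_eq.refl)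
  finally show ?case .
next
  case (4 a f t1 t2)
  let ?x = "pos (X (False # a))" and ?y = "pos (X (False # False # a))"
  let ?A = "pos (GA [])" and ?d = "sh [True] (Cc t2)"
  from "4.prems"(2) obtain s where s: "at_addr a f t1 = Some s" "t' = Circ s t2" by auto
  have IH: "ald_eq (Cc s) (Cc t1 @ [?x])" using "4.IH"[OF "4.prems"(1) s(1)] .
  have "ald_eq (Cc t') (Cc s @ ?d @ [?A])" using s by (simp add: ald_eq.refl)
  also have "ald_eq \<dots> (Cc t1 @ [?x] @ ?d @ [?A])"
    using ald_eq_ctx[OF IH, of "[]" "?d @ [?A]"] by simp
  also have "ald_eq \<dots> (Cc t1 @ ?d @ [?x, ?A])"
    using ald_eq_ctx[OF comm_sh1_0[OF X, where u="Cc t2" and q=a, unfolded comm_def, THEN ald_eq.sym], of "Cc t1" "[?A]"] by simp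
  also have "ald_eq \<dots> (Cc t1 @ ?d @ [?A, ?y])"
    using ald_eq_ctx[OF rel_eq[OF ald_rels.A0[OF X, of "[]" a]], of "Cc t1 @ ?d" "[]"] by simp
  also have "ald_eq \<dots> (Cc (Circ t1 t2) @ [pos (X (False # False # a))])" by (simp add: ald_eq.refl)
  finally show ?case .
next
  case (5 a f t1 t2)
  let ?x = "pos (X (False # a))" and ?z = "pos (X (True # False # a))" and ?w = "pos (X (False # True # a))"
  let ?A = "pos (GA [])" and ?d = "sh [True] (Cc t2)"
  from "5.prems"(2) obtain s where s: "at_addr a f t2 = Some s" "t' = Circ t1 s" by auto
  have IH: "ald_eq (Cc s) (Cc t2 @ [?x])" using "5.IH"[OF "5.prems"(1) s(1)] .
  have "ald_eq (Cc t') (Cc t1 @ sh [True] (Cc s) @ [?A])" using s by (simp add: ald_eq.refl)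
  also have "ald_eq \<dots> (Cc t1 @ sh [True] (Cc t2 @ [?x]) @ [?A])"
    using ald_eq_ctx[OF sh_cong[OF IH, of "[True]"], of "Cc t1" "[?A]"] by simp
  also have "ald_eq \<dots> (Cc t1 @ ?d @ [?z, ?A])" by (simp add: shX[OF X] ald_eq.refl)
  also have "ald_eq \<dots> (Cc t1 @ ?d @ [?A, ?w])"
    using ald_eq_ctx[OF rel_eq[OF ald_rels.A10[OF X, of "[]" a]], of "Cc t1 @ ?d" "[]"] by simp
  also have "ald_eq \<dots> (Cc (Circ t1 t2) @ [pos (X (False # True # a))])" by (simp add: ald_eq.refl)
  finally show ?case .
next
  case (6 uu a f) then show ?case by simp
qed


lemma root_Sp: assumes "Splus0 t = Some t'" shows "ald_eq (Cc t') (Cc t @ [pos (GS [False])])"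
proof (cases t)
  case Var then show ?thesis using assms by simp
next
  case (Circ t1 u) then show ?thesis using assms by simp
next
  case (Star t1 u)
  show ?thesis
  proof (cases u)
    case Var then show ?thesis using assms Star by simp
  next
    case (Star t2 t3)
    have e: "t' = Star (Star t1 t2) (Star t1 t3)" using assms Star \<open>t = Star t1 u\<close> by simp
    show ?thesis using root_SS[of t1 t2 t3] by (simp only: e Star \<open>t = Star t1 u\<close>)
  next
    case (Circ t2 t3)
    have e: "t' = Circ (Star t1 t2) (Star t1 t3)" using assms Circ \<open>t = Star t1 u\<close> by simp
    show ?thesis using root_SC[of t1 t2 t3] by (simp only: e Circ \<open>t = Star t1 u\<close>)
  qed
qed

lemma root_Ap: assumes "Aplus0 t = Some t'" shows "ald_eq (Cc t') (Cc t @ [pos (GA [False])])"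
proof (cases t)
  case Var then show ?thesis using assms by simp
next
  case (Circ t1 u) then show ?thesis using assms by simp
next
  case (Star t1 u)
  show ?thesis
  proof (cases u)
    case Var then show ?thesis using assms Star by simp
  next
    case (Star t2 t3)
    have e: "t' = Star (Circ t1 t2) t3" using assms Star \<open>t = Star t1 u\<close> by simp
    show ?thesis using root_A[of t1 t2 t3] by (simp only: e Star \<open>t = Star t1 u\<close>)
  next
    case (Circ t2 t3)
    then show ?thesis using assms \<open>t = Star t1 u\<close> by simp
  qed
qed

lemma Sminus_inv: "Sminus0 t = Some t' \<Longrightarrow> Splus0 t' = Some t"
  by (induction t rule: Sminus0.induct) (auto split: if_splits)

lemma Aminus_inv: "Aminus0 t = Some t' \<Longrightarrow> Aplus0 t' = Some t"
  by (induction t rule: Aminus0.induct) auto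

lemma at_inv: "(\<And>t t'. g t = Some t' \<Longrightarrow> f t' = Some t) \<Longrightarrow> at_addr a g t = Some t' \<Longrightarrow> at_addr a f t' = Some t"
  by (induction a g t arbitrary: t' rule: at_addr.induct) auto

lemma inv_step: assumes "ald_eq (Cc t) (Cc t' @ [pos g])" shows "ald_eq (Cc t') (Cc t @ [(g, False)])"
proof -
  have "ald_eq (Cc t @ [(g, False)]) (Cc t' @ [pos g] @ [(g, False)])"
    using ald_eq_ctx[OF assms, of "[]" "[(g, False)]"] by simp
  also have "ald_eq (Cc t' @ [pos g] @ [(g, False)]) (Cc t')"
    using ald_eq_ctx[OF cancel2[of g True], of "Cc t'" "[]"] by (simp add: pos_def)
  finally show ?thesis by (rule ald_eq.sym)
qed

lemma single: assumes "letter_op l t = Some s" shows "ald_eq (Cc s) (Cc t @ sh [False] [letter_grp l])"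
proof (cases l)
  case (Sp a)
  then show ?thesis using lift[of GS Splus0 a t s] root_Sp assms by (simp add: pos_def)
next
  case (Sm a)
  have "at_addr a Splus0 s = Some t" using at_inv[of Sminus0 Splus0 a t s] Sminus_inv assms Sm by simp
  then have "ald_eq (Cc t) (Cc s @ [pos (GS (False # a))])" using lift[of GS Splus0 a s t] root_Sp by simp
  then show ?thesis using inv_step Sm by simp
next
  case (Ap a)
  then show ?thesis using lift[of GA Aplus0 a t s] root_Ap assms by (simp add: pos_def)
next
  case (Am a)
  have "at_addr a Aplus0 s = Some t" using at_inv[of Aminus0 Aplus0 a t s] Aminus_inv assms Am by simp
  then have "ald_eq (Cc t) (Cc s @ [pos (GA (False # a))])" using lift[of GA Aplus0 a s t] root_Ap by simp
  then show ?thesis using inv_step Am by simp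
qed

theorem lemma3p8:
  fixes t t' :: trm and w :: "letter list"
  assumes "eval_op w t = Some t'"
  shows "ald_eq (Cc t') (Cc t @ sh [False] (eval_grp w))"
  using assms
proof (induction w arbitrary: t)
  case Nil then show ?case by (simp add: eval_grp_def ald_eq.refl)
next
  case (Cons l w)
  from Cons.prems obtain s where s: "letter_op l t = Some s" "eval_op w s = Some t'"
    by (cases "letter_op l t") auto
  have "ald_eq (Cc t') (Cc s @ sh [False] (eval_grp w))" using Cons.IH[OF s(2)] .
  also have "ald_eq (Cc s @ sh [False] (eval_grp w)) ((Cc t @ sh [False] [letter_grp l]) @ sh [False] (eval_grp w))"
    using ald_eq_ctx[OF single[OF s(1)], of "[]" "sh [False] (eval_grp w)"] by simp
  also have "ald_eq ((Cc t @ sh [False] [letter_grp l]) @ sh [False] (eval_grp w)) (Cc t @ sh [False] (eval_grp (l # w)))"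
    by (simp add: eval_grp_def sh_def ald_eq.refl)
  finally show ?case .
qed

end
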